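(* Let $X$ be a finite set, let $\Sigma$ be a set of implications on $X$ with closure system $\mathcal{F}_\Sigma$, and let $A\subseteq X$ be a set with $A\notin\mathcal{F}_\Sigma$. Let $\mathcal{F}_\Sigma(A)=\mathcal{F}_\Sigma\cup\{F\cap A: F\in\mathcal{F}_\Sigma\}$ and let $\Sigma(A)$ be the body-building formula. Then: (1) every member of $\mathcal{F}_\Sigma(A)$ satisfies every implication of $\Sigma(A)$; (2) every set $P\subseteq X$ with $P\not\subseteq A$ that satisfies every implication of $\Sigma(A)$ belongs to $\mathcal{F}_\Sigma(A)$; (3) if $\Sigma$ is a direct basis (of $\mathcal{F}_\Sigma$), then $\Sigma(A)$ is a basis of the closure system $\mathcal{F}_\Sigma(A)$, i.e. $\mathcal{F}_{\Sigma(A)}=\mathcal{F}_\Sigma(A)$, and moreover $\Sigma(A)$ is a direct basis of $\mathcal{F}_\Sigma(A)$.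
   Context: An implication on a finite set $X$ is a pair written $C\rightarrow d$ with $C\subseteq X$, $d\in X$. A set $Y\subseteq X$ satisfies $C\rightarrow d$ (the implication holds on $Y$) if $C\not\subseteq Y$ or $d\in Y$; otherwise the implication fails on $Y$. For a set $\Sigma$ of implications, $\mathcal{F}_\Sigma$ is the family of all $Y\subseteq X$ satisfying every implication of $\Sigma$; it is a closure system (closed under intersections, containing $X$), and $\Sigma$ is called a basis of a closure system $\mathcal{F}$ if $\mathcal{F}_\Sigma=\mathcal{F}$. The associated closure operator is $\varphi(Y)=$ the smallest member of $\mathcal{F}_\Sigma$ containing $Y$. $\Sigma$ is direct if for every $Y\subseteq X$, $\varphi(Y)=Y\cup\{d:(C\rightarrow d)\in\Sigma,\ C\subseteq Y\}$. Body-building formula: $\Sigma_t(A)$ is the set of implications of $\Sigma$ that hold on $A$, and $\Sigma_f(A)$ the set of those that fail on $A$ (i.e. $C\subseteq A$, $d\notin A$). For $\sigma=(C\rightarrow d)\in\Sigma_f(A)$ let $\sigma(A)=\{C\cup\{x\}\rightarrow d: x\in X\setminus(A\cup\{d\})\}$ (empty if $X\setminus(A\cup\{d\})=\emptyset$). Then $\Sigma(A)=\Sigma_t(A)\cup\bigcup_{\sigma\in\Sigma_f(A)}\sigma(A)$. *)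

theory Defs
  imports Main
begin

type_synonym 'a impl = "'a set \<times> 'a"

definition is_impl_on :: "'a set \<Rightarrow> 'a impl set \<Rightarrow> bool" where
  "is_impl_on X \<Sigma> \<longleftrightarrow> (\<forall>(C, d) \<in> \<Sigma>. C \<subseteq> X \<and> d \<in> X)"

definition holds :: "'a set \<Rightarrow> 'a impl \<Rightarrow> bool" where
  "holds Y \<sigma> \<longleftrightarrow> (\<not> fst \<sigma> \<subseteq> Y \<or> snd \<sigma> \<in> Y)"

definition fails :: "'a set \<Rightarrow> 'a impl \<Rightarrow> bool" where
  "fails Y \<sigma> \<longleftrightarrow> (fst \<sigma> \<subseteq> Y \<and> snd \<sigma> \<notin> Y)"

definition FSys :: "'a set \<Rightarrow> 'a impl set \<Rightarrow> 'a set set" where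
  "FSys X \<Sigma> = {Y. Y \<subseteq> X \<and> (\<forall>\<sigma>\<in>\<Sigma>. holds Y \<sigma>)}"

definition phi :: "'a set \<Rightarrow> 'a impl set \<Rightarrow> 'a set \<Rightarrow> 'a set" where
  "phi X \<Sigma> Y = \<Inter> {F \<in> FSys X \<Sigma>. Y \<subseteq> F}"

definition direct :: "'a set \<Rightarrow> 'a impl set \<Rightarrow> bool" where
  "direct X \<Sigma> \<longleftrightarrow>
     (\<forall>Y. Y \<subseteq> X \<longrightarrow> phi X \<Sigma> Y = Y \<union> {d. \<exists>C. (C, d) \<in> \<Sigma> \<and> C \<subseteq> Y})"

definition Sigma_t :: "'a impl set \<Rightarrow> 'a set \<Rightarrow> 'a impl set" where
  "Sigma_t \<Sigma> A = {\<sigma> \<in> \<Sigma>. holds A \<sigma>}"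

definition Sigma_f :: "'a impl set \<Rightarrow> 'a set \<Rightarrow> 'a impl set" where
  "Sigma_f \<Sigma> A = {\<sigma> \<in> \<Sigma>. fails A \<sigma>}"

definition sigma_ext :: "'a set \<Rightarrow> 'a set \<Rightarrow> 'a impl \<Rightarrow> 'a impl set" where
  "sigma_ext X A \<sigma> = {(insert x (fst \<sigma>), snd \<sigma>) | x. x \<in> X - (A \<union> {snd \<sigma>})}"

definition body_build :: "'a set \<Rightarrow> 'a impl set \<Rightarrow> 'a set \<Rightarrow> 'a impl set" where
  "body_build X \<Sigma> A = Sigma_t \<Sigma> A \<union> (\<Union>\<sigma> \<in> Sigma_f \<Sigma> A. sigma_ext X A \<sigma>)"

definition FSysA :: "'a set \<Rightarrow> 'a impl set \<Rightarrow> 'a set \<Rightarrow> 'a set set" where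
  "FSysA X \<Sigma> A = FSys X \<Sigma> \<union> {F \<inter> A | F. F \<in> FSys X \<Sigma>}"

end

theory Submission
  imports Defs
begin

lemma X_in_FSys: "is_impl_on X \<Sigma> \<Longrightarrow> X \<in> FSys X \<Sigma>"
  unfolding is_impl_on_def FSys_def holds_def by auto

lemma phi_in: assumes "is_impl_on X \<Sigma>" "Y \<subseteq> X"
  shows "phi X \<Sigma> Y \<in> FSys X \<Sigma> \<and> Y \<subseteq> phi X \<Sigma> Y"
proof -
  have X: "X \<in> {F \<in> FSys X \<Sigma>. Y \<subseteq> F}" using X_in_FSys[OF assms(1)] assms(2) by auto
  have "phi X \<Sigma> Y \<subseteq> X" unfolding phi_def using X by blast
  moreover have "\<forall>\<sigma>\<in>\<Sigma>. holds (phi X \<Sigma> Y) \<sigma>"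
  proof
    fix \<sigma> assume s: "\<sigma> \<in> \<Sigma>"
    show "holds (phi X \<Sigma> Y) \<sigma>"
      unfolding holds_def phi_def
    proof (intro disjCI)
      assume "\<not> snd \<sigma> \<in> \<Inter> {F \<in> FSys X \<Sigma>. Y \<subseteq> F}"
      then obtain F where F: "F \<in> FSys X \<Sigma>" "Y \<subseteq> F" "snd \<sigma> \<notin> F" by blast
      hence "\<not> fst \<sigma> \<subseteq> F" using s unfolding FSys_def holds_def by auto
      thus "\<not> fst \<sigma> \<subseteq> \<Inter> {F \<in> FSys X \<Sigma>. Y \<subseteq> F}" using F by blast
    qed
  qed
  ultimately show ?thesis unfolding FSys_def phi_def by blast
qed

lemma phi_char: assumes "R \<in> FSys X S" "Y \<subseteq> R" "\<forall>G\<in>FSys X S. Y \<subseteq> G \<longrightarrow> R \<subseteq> G"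
  shows "phi X S Y = R"
  unfolding phi_def using assms by blast

lemma mem_bb_lem: "\<sigma> \<in> body_build X \<Sigma> A \<longleftrightarrow> (\<sigma> \<in> \<Sigma> \<and> holds A \<sigma>) \<or>
     (\<exists>C d x. (C, d) \<in> \<Sigma> \<and> C \<subseteq> A \<and> d \<notin> A \<and> x \<in> X \<and> x \<notin> A \<and> x \<noteq> d \<and> \<sigma> = (insert x C, d))"
proof -
  have "(\<exists>\<tau>\<in>Sigma_f \<Sigma> A. \<sigma> \<in> sigma_ext X A \<tau>) \<longleftrightarrow>
     (\<exists>C d x. (C, d) \<in> \<Sigma> \<and> C \<subseteq> A \<and> d \<notin> A \<and> x \<in> X \<and> x \<notin> A \<and> x \<noteq> d \<and> \<sigma> = (insert x C, d))"
    unfolding Sigma_f_def sigma_ext_def fails_def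
    apply (rule iffI)
     apply (clarsimp, blast)
    apply clarify
    apply (rule_tac x="(C,d)" in bexI)
     apply auto
    done
  thus ?thesis unfolding body_build_def Sigma_t_def by blast
qed

theorem mainTheorem1:
  fixes X A :: "'a set" and \<Sigma> :: "'a impl set"
  assumes "finite X"
    and "is_impl_on X \<Sigma>"
    and "A \<subseteq> X"
    and "A \<notin> FSys X \<Sigma>"
  shows "(\<forall>Y \<in> FSysA X \<Sigma> A. \<forall>\<sigma> \<in> body_build X \<Sigma> A. holds Y \<sigma>)
    \<and> (\<forall>P. P \<subseteq> X \<and> \<not> P \<subseteq> A \<and> (\<forall>\<sigma> \<in> body_build X \<Sigma> A. holds P \<sigma>)
           \<longrightarrow> P \<in> FSysA X \<Sigma> A)
    \<and> (direct X \<Sigma> \<longrightarrow>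
         FSys X (body_build X \<Sigma> A) = FSysA X \<Sigma> A \<and> direct X (body_build X \<Sigma> A))"
proof -
  note imp = assms(2)
  have mem_bb: "\<sigma> \<in> body_build X \<Sigma> A \<longleftrightarrow> (\<sigma> \<in> \<Sigma> \<and> holds A \<sigma>) \<or>
     (\<exists>C d x. (C, d) \<in> \<Sigma> \<and> C \<subseteq> A \<and> d \<notin> A \<and> x \<in> X \<and> x \<notin> A \<and> x \<noteq> d \<and> \<sigma> = (insert x C, d))" for \<sigma>
    by (rule mem_bb_lem)
  have P1: "\<forall>Y \<in> FSysA X \<Sigma> A. \<forall>\<sigma> \<in> body_build X \<Sigma> A. holds Y \<sigma>"
  proof (intro ballI)
    fix Y \<sigma> assume Y: "Y \<in> FSysA X \<Sigma> A" and s: "\<sigma> \<in> body_build X \<Sigma> A"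
    show "holds Y \<sigma>"
    proof (cases "Y \<in> FSys X \<Sigma>")
      case True
      then show ?thesis using s unfolding mem_bb FSys_def holds_def by force
    next
      case False
      then obtain F where F: "F \<in> FSys X \<Sigma>" "Y = F \<inter> A" using Y unfolding FSysA_def by blast
      show ?thesis using s F unfolding mem_bb FSys_def holds_def by force
    qed
  qed
  have P2: "\<forall>P. P \<subseteq> X \<and> \<not> P \<subseteq> A \<and> (\<forall>\<sigma> \<in> body_build X \<Sigma> A. holds P \<sigma>) \<longrightarrow> P \<in> FSys X \<Sigma>"
  proof (intro allI impI)
    fix P assume H: "P \<subseteq> X \<and> \<not> P \<subseteq> A \<and> (\<forall>\<sigma> \<in> body_build X \<Sigma> A. holds P \<sigma>)"
    then obtain y where y: "y \<in> P" "y \<notin> A" by blast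
    have "holds P (C, d)" if "(C, d) \<in> \<Sigma>" for C d
    proof (cases "holds A (C, d)")
      case True
      then show ?thesis using H that mem_bb[of "(C,d)"] by blast
    next
      case False
      hence CA: "C \<subseteq> A" "d \<notin> A" unfolding holds_def by auto
      show ?thesis
      proof (cases "y = d")
        case True then show ?thesis using y unfolding holds_def by simp
      next
        case False
        hence "(insert y C, d) \<in> body_build X \<Sigma> A" unfolding mem_bb using that CA y H by blast
        hence "holds P (insert y C, d)" using H by blast
        thus ?thesis using y unfolding holds_def by auto
      qed
    qed
    thus "P \<in> FSys X \<Sigma>" using H unfolding FSys_def by auto
  qed
  have P2': "\<forall>P. P \<subseteq> X \<and> \<not> P \<subseteq> A \<and> (\<forall>\<sigma> \<in> body_build X \<Sigma> A. holds P \<sigma>) \<longrightarrow> P \<in> FSysA X \<Sigma> A"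
    using P2 unfolding FSysA_def by blast
  have P3: "FSys X (body_build X \<Sigma> A) = FSysA X \<Sigma> A \<and> direct X (body_build X \<Sigma> A)"
    if dir: "direct X \<Sigma>"
  proof -
    have phiD: "phi X \<Sigma> Y = Y \<union> {d. \<exists>C. (C, d) \<in> \<Sigma> \<and> C \<subseteq> Y}" if "Y \<subseteq> X" for Y
      using dir that unfolding direct_def by blast
    have sub1: "FSysA X \<Sigma> A \<subseteq> FSys X (body_build X \<Sigma> A)"
    proof
      fix Y assume Y: "Y \<in> FSysA X \<Sigma> A"
      have "Y \<subseteq> X" using Y assms(3) unfolding FSysA_def FSys_def by auto
      thus "Y \<in> FSys X (body_build X \<Sigma> A)" using P1 Y unfolding FSys_def by blast
    qed
    have small: "phi X \<Sigma> Y \<inter> A = Y \<union> {d. \<exists>C. (C, d) \<in> body_build X \<Sigma> A \<and> C \<subseteq> Y}"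
      if "Y \<subseteq> A" for Y
    proof -
      have YX: "Y \<subseteq> X" using that assms(3) by auto
      show ?thesis unfolding phiD[OF YX]
      proof (intro equalityI subsetI)
        fix z assume "z \<in> (Y \<union> {d. \<exists>C. (C, d) \<in> \<Sigma> \<and> C \<subseteq> Y}) \<inter> A"
        then consider "z \<in> Y" | C where "(C, z) \<in> \<Sigma>" "C \<subseteq> Y" "z \<in> A" by blast
        then show "z \<in> Y \<union> {d. \<exists>C. (C, d) \<in> body_build X \<Sigma> A \<and> C \<subseteq> Y}"
        proof cases
          case 1 then show ?thesis by blast
        next
          case 2
          hence "holds A (C, z)" unfolding holds_def by simp
          hence "(C, z) \<in> body_build X \<Sigma> A" using 2 unfolding mem_bb by blast
          then show ?thesis using 2 by blast
        qed
      next
        fix z assume "z \<in> Y \<union> {d. \<exists>C. (C, d) \<in> body_build X \<Sigma> A \<and> C \<subseteq> Y}"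
        then consider "z \<in> Y" | C where "(C, z) \<in> body_build X \<Sigma> A" "C \<subseteq> Y" by blast
        then show "z \<in> (Y \<union> {d. \<exists>C. (C, d) \<in> \<Sigma> \<and> C \<subseteq> Y}) \<inter> A"
        proof cases
          case 1 then show ?thesis using that by blast
        next
          case 2
          then show ?thesis using that unfolding mem_bb holds_def by auto
        qed
      qed
    qed
    have sub2: "FSys X (body_build X \<Sigma> A) \<subseteq> FSysA X \<Sigma> A"
    proof
      fix P assume P: "P \<in> FSys X (body_build X \<Sigma> A)"
      show "P \<in> FSysA X \<Sigma> A"
      proof (cases "P \<subseteq> A")
        case False
        then show ?thesis using P P2' unfolding FSys_def by blast
      next
        case True
        have "{d. \<exists>C. (C, d) \<in> body_build X \<Sigma> A \<and> C \<subseteq> P} \<subseteq> P"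
          using P unfolding FSys_def holds_def by force
        hence "phi X \<Sigma> P \<inter> A = P" using small[OF True] by blast
        moreover have "phi X \<Sigma> P \<in> FSys X \<Sigma>" using phi_in[OF imp] True assms(3) by blast
        ultimately show ?thesis unfolding FSysA_def by blast
      qed
    qed
    have eq: "FSys X (body_build X \<Sigma> A) = FSysA X \<Sigma> A" using sub1 sub2 by blast
    have "direct X (body_build X \<Sigma> A)"
      unfolding direct_def
    proof (intro allI impI)
      fix Y assume YX: "Y \<subseteq> X"
      define R where "R = Y \<union> {d. \<exists>C. (C, d) \<in> body_build X \<Sigma> A \<and> C \<subseteq> Y}"
      have RA: "R \<in> FSysA X \<Sigma> A"
      proof (cases "Y \<subseteq> A")
        case True
        have "phi X \<Sigma> Y \<in> FSys X \<Sigma>" using phi_in[OF imp YX] by blast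
        then show ?thesis using small[OF True] unfolding R_def FSysA_def by blast
      next
        case False
        then obtain y where y: "y \<in> Y" "y \<notin> A" by blast
        have "R = phi X \<Sigma> Y" unfolding phiD[OF YX] R_def
        proof (intro equalityI subsetI)
          fix z assume "z \<in> Y \<union> {d. \<exists>C. (C, d) \<in> body_build X \<Sigma> A \<and> C \<subseteq> Y}"
          then show "z \<in> Y \<union> {d. \<exists>C. (C, d) \<in> \<Sigma> \<and> C \<subseteq> Y}"
            unfolding mem_bb by auto
        next
          fix z assume "z \<in> Y \<union> {d. \<exists>C. (C, d) \<in> \<Sigma> \<and> C \<subseteq> Y}"
          then consider "z \<in> Y" | C where "(C, z) \<in> \<Sigma>" "C \<subseteq> Y" by blast
          then show "z \<in> Y \<union> {d. \<exists>C. (C, d) \<in> body_build X \<Sigma> A \<and> C \<subseteq> Y}"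
          proof cases
            case 1 then show ?thesis by blast
          next
            case 2
            show ?thesis
            proof (cases "holds A (C, z)")
              case True
              then show ?thesis using 2 unfolding mem_bb by blast
            next
              case False
              hence CA: "C \<subseteq> A" "z \<notin> A" unfolding holds_def by auto
              show ?thesis
              proof (cases "y = z")
                case True then show ?thesis using y by blast
              next
                case False
                hence "(insert y C, z) \<in> body_build X \<Sigma> A"
                  unfolding mem_bb using 2 CA y YX by blast
                then show ?thesis using 2 y by blast
              qed
            qed
          qed
        qed
        moreover have "phi X \<Sigma> Y \<in> FSys X \<Sigma>" using phi_in[OF imp YX] by blast
        ultimately show ?thesis unfolding FSysA_def by blast
      qed
      have R1: "R \<in> FSys X (body_build X \<Sigma> A)" using RA eq by simp
      have R2: "\<forall>G\<in>FSys X (body_build X \<Sigma> A). Y \<subseteq> G \<longrightarrow> R \<subseteq> G"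
        unfolding R_def FSys_def holds_def by force
      show "phi X (body_build X \<Sigma> A) Y = Y \<union> {d. \<exists>C. (C, d) \<in> body_build X \<Sigma> A \<and> C \<subseteq> Y}"
        using phi_char[OF R1 _ R2] unfolding R_def by blast
    qed
    with eq show ?thesis by blast
  qed
  show ?thesis using P1 P2' P3 by blast
qed

end
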